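(* Let $G\leq\mathrm{Sym}(m)$ and $H\leq\mathrm{Sym}(n)$ both have the EKR property (for their natural actions). Then the wreath product $G\wr H$, acting on $\{1,\dots,m\}\times\{1,\dots,n\}$ by $(x,j)^{(g_1,\dots,g_n,h)}=(g_j(x),h(j))$, has the EKR property.
   Context: The wreath product $G\wr H$ has underlying set $G^n\times H$ with multiplication $(g_1,\dots,g_n,h)(g'_1,\dots,g'_n,h')=(g_1g'_{h(1)},\dots,g_ng'_{h(n)},hh')$. For a permutation group acting on a finite set: two elements $\pi,\tau$ intersect if $\pi\tau^{-1}$ has a fixed point; a subset is intersecting if every pair intersects; the group has the EKR property if every intersecting subset has size at most the size of the largest point-stabilizer. *)

theory Defs
  imports "HOL-Combinatorics.Permutations"
begin

definition perm_group :: "'a set \<Rightarrow> ('a \<Rightarrow> 'a) set \<Rightarrow> bool" where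
  "perm_group \<Omega> G \<longleftrightarrow> G \<noteq> {} \<and> (\<forall>g\<in>G. g permutes \<Omega>)
     \<and> (\<forall>g\<in>G. \<forall>h\<in>G. g \<circ> h \<in> G) \<and> (\<forall>g\<in>G. inv g \<in> G)"

definition perms_intersect :: "'a set \<Rightarrow> ('a \<Rightarrow> 'a) \<Rightarrow> ('a \<Rightarrow> 'a) \<Rightarrow> bool" where
  "perms_intersect \<Omega> \<pi> \<tau> \<longleftrightarrow> (\<exists>x\<in>\<Omega>. (\<pi> \<circ> inv \<tau>) x = x)"

definition intersecting :: "'a set \<Rightarrow> ('a \<Rightarrow> 'a) set \<Rightarrow> bool" where
  "intersecting \<Omega> S \<longleftrightarrow> (\<forall>\<pi>\<in>S. \<forall>\<tau>\<in>S. \<pi> \<noteq> \<tau> \<longrightarrow> perms_intersect \<Omega> \<pi> \<tau>)"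

definition stabilizer :: "('a \<Rightarrow> 'a) set \<Rightarrow> 'a \<Rightarrow> ('a \<Rightarrow> 'a) set" where
  "stabilizer G x = {g\<in>G. g x = x}"

text \<open>Size of the largest point stabilizer (0 if \<open>\<Omega>\<close> is empty).\<close>
definition max_stab :: "'a set \<Rightarrow> ('a \<Rightarrow> 'a) set \<Rightarrow> nat" where
  "max_stab \<Omega> G = Max (insert 0 ((\<lambda>x. card (stabilizer G x)) ` \<Omega>))"

definition EKR :: "'a set \<Rightarrow> ('a \<Rightarrow> 'a) set \<Rightarrow> bool" where
  "EKR \<Omega> G \<longleftrightarrow> (\<forall>S\<subseteq>G. intersecting \<Omega> S \<longrightarrow> card S \<le> max_stab \<Omega> G)"

text \<open>The permutation of \<open>{0..<m} \<times> {0..<n}\<close> induced by \<open>(g\<^sub>0,\<dots>,g\<^sub>n\<^sub>-\<^sub>1,h)\<close>: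
  \<open>(x,j) \<mapsto> (g\<^sub>j x, h j)\<close>, identity outside the domain.\<close>
definition wreath_perm :: "nat \<Rightarrow> nat \<Rightarrow> (nat \<Rightarrow> nat \<Rightarrow> nat) \<Rightarrow> (nat \<Rightarrow> nat) \<Rightarrow> (nat \<times> nat \<Rightarrow> nat \<times> nat)" where
  "wreath_perm m n g h = (\<lambda>(x, j). if x < m \<and> j < n then (g j x, h j) else (x, j))"

definition wreath :: "nat \<Rightarrow> nat \<Rightarrow> (nat \<Rightarrow> nat) set \<Rightarrow> (nat \<Rightarrow> nat) set \<Rightarrow> (nat \<times> nat \<Rightarrow> nat \<times> nat) set" where
  "wreath m n G H = {wreath_perm m n g h | g h. (\<forall>j<n. g j \<in> G) \<and> h \<in> H}"

end

theory Submission
  imports Defs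
begin


lemma pg_permutes: "perm_group \<Omega> G \<Longrightarrow> g \<in> G \<Longrightarrow> g permutes \<Omega>"
  unfolding perm_group_def by blast
lemma pg_comp: "perm_group \<Omega> G \<Longrightarrow> g \<in> G \<Longrightarrow> h \<in> G \<Longrightarrow> g \<circ> h \<in> G"
  unfolding perm_group_def by blast
lemma pg_inv: "perm_group \<Omega> G \<Longrightarrow> g \<in> G \<Longrightarrow> inv g \<in> G"
  unfolding perm_group_def by blast
lemma pg_finite: "perm_group \<Omega> G \<Longrightarrow> finite \<Omega> \<Longrightarrow> finite G"
  by (rule finite_subset[OF _ finite_permutations], auto dest: pg_permutes)
lemma pg_nonempty: "perm_group \<Omega> G \<Longrightarrow> G \<noteq> {}"
  unfolding perm_group_def by blast

lemma intersect_iff: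
  assumes "\<tau> permutes \<Delta>"
  shows "perms_intersect \<Delta> \<sigma> \<tau> \<longleftrightarrow> (\<exists>q\<in>\<Delta>. \<sigma> q = \<tau> q)"
proof
  assume "perms_intersect \<Delta> \<sigma> \<tau>"
  then obtain x where x: "x \<in> \<Delta>" "\<sigma> (inv \<tau> x) = x" unfolding perms_intersect_def by auto
  have "inv \<tau> x \<in> \<Delta>" using permutes_in_image[OF permutes_inv[OF assms]] x by simp
  moreover have "\<tau> (inv \<tau> x) = x" using permutes_inverses[OF assms] by simp
  ultimately show "\<exists>q\<in>\<Delta>. \<sigma> q = \<tau> q" using x by metis
next
  assume "\<exists>q\<in>\<Delta>. \<sigma> q = \<tau> q"
  then obtain q where q: "q \<in> \<Delta>" "\<sigma> q = \<tau> q" by auto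
  have "\<tau> q \<in> \<Delta>" using permutes_in_image[OF assms] q by simp
  moreover have "(\<sigma> \<circ> inv \<tau>) (\<tau> q) = \<tau> q" using permutes_inverses[OF assms] q by simp
  ultimately show "perms_intersect \<Delta> \<sigma> \<tau>" unfolding perms_intersect_def by blast
qed

lemma EKR_nonempty:
  assumes "perm_group \<Omega> G" "EKR \<Omega> G" shows "\<Omega> \<noteq> {}"
proof
  assume e: "\<Omega> = {}"
  obtain g where g: "g \<in> G" using pg_nonempty[OF assms(1)] by blast
  have "intersecting \<Omega> {g}" unfolding intersecting_def by auto
  hence "card {g} \<le> max_stab \<Omega> G" using assms(2) g unfolding EKR_def by blast
  thus False using e unfolding max_stab_def by simp
qed

lemma max_stab_attained:
  assumes "perm_group \<Omega> G" "\<Omega> \<noteq> {}" "finite \<Omega>"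
  shows "\<exists>x\<in>\<Omega>. max_stab \<Omega> G \<le> card (stabilizer G x)"
proof -
  have "max_stab \<Omega> G \<in> insert 0 ((\<lambda>x. card (stabilizer G x)) ` \<Omega>)"
    unfolding max_stab_def by (rule Max_in) (use assms in auto)
  thus ?thesis using assms(2) by auto
qed

lemma max_stab_ge:
  assumes "finite \<Omega>" "x \<in> \<Omega>"
  shows "card (stabilizer G x) \<le> max_stab \<Omega> G"
  unfolding max_stab_def by (rule Max_ge) (use assms in auto)



context
  fixes m n :: nat and G H :: "(nat \<Rightarrow> nat) set"
  assumes pgG: "perm_group {0..<m} G" and pgH: "perm_group {0..<n} H"
    and mpos: "0 < m" and npos: "0 < n"
begin

lemma wp_app: "wreath_perm m n g h (x, j) = (if x < m \<and> j < n then (g j x, h j) else (x, j))"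
  unfolding wreath_perm_def by simp

lemma G_in: "a \<in> G \<Longrightarrow> x < m \<Longrightarrow> a x < m"
  using permutes_in_image[OF pg_permutes[OF pgG]] by auto
lemma H_in: "k \<in> H \<Longrightarrow> j < n \<Longrightarrow> k j < n"
  using permutes_in_image[OF pg_permutes[OF pgH]] by auto
lemma G_out: "a \<in> G \<Longrightarrow> \<not> x < m \<Longrightarrow> a x = x"
  using permutes_not_in[OF pg_permutes[OF pgG]] by auto
lemma H_out: "k \<in> H \<Longrightarrow> \<not> j < n \<Longrightarrow> k j = j"
  using permutes_not_in[OF pg_permutes[OF pgH]] by auto

lemma wp_permutes:
  assumes g: "\<forall>j<n. g j \<in> G" and h: "h \<in> H"
  shows "wreath_perm m n g h permutes ({0..<m} \<times> {0..<n})"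
proof (rule inj_imp_permutes)
  show "inj_on (wreath_perm m n g h) ({0..<m} \<times> {0..<n})"
  proof (rule inj_onI)
    fix p q
    assume in1: "p \<in> {0..<m} \<times> {0..<n}" and in2: "q \<in> {0..<m} \<times> {0..<n}"
      and eq: "wreath_perm m n g h p = wreath_perm m n g h q"
    obtain x j x' j' where pq: "p = (x, j)" "q = (x', j')" by (cases p, cases q) auto
    have "h j = h j'" "g j x = g j' x'" using eq in1 in2 pq by (auto simp: wp_app)
    hence jj: "j = j'" using permutes_inj[OF pg_permutes[OF pgH h]] by (auto dest: injD)
    have "g j x = g j x'" using \<open>g j x = g j' x'\<close> jj by simp
    hence "x = x'" using permutes_inj[OF pg_permutes[OF pgG]] g in1 pq by (auto dest: injD)
    thus "p = q" using jj pq by simp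
  qed
  show "finite ({0..<m} \<times> {0..<n})" by simp
  show "\<And>p. p \<in> {0..<m} \<times> {0..<n} \<Longrightarrow> wreath_perm m n g h p \<in> {0..<m} \<times> {0..<n}"
    using g h by (auto simp: wp_app G_in H_in)
  show "\<And>p. p \<notin> {0..<m} \<times> {0..<n} \<Longrightarrow> wreath_perm m n g h p = p"
    by (case_tac p) (auto simp: wp_app)
qed

lemma W_elim:
  assumes "t \<in> wreath m n G H"
  obtains g h where "\<forall>j<n. g j \<in> G" "h \<in> H" "t = wreath_perm m n g h"
  using assms unfolding wreath_def by blast

lemma W_permutes: "t \<in> wreath m n G H \<Longrightarrow> t permutes ({0..<m} \<times> {0..<n})"
  by (metis W_elim wp_permutes)

lemma wp_comp:
  assumes g: "\<forall>j<n. g j \<in> G" and h: "h \<in> H"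
  shows "wreath_perm m n (\<lambda>_. a) k \<circ> wreath_perm m n g h = wreath_perm m n (\<lambda>j. a \<circ> g j) (k \<circ> h)"
proof (rule ext, clarify)
  fix x j
  show "(wreath_perm m n (\<lambda>_. a) k \<circ> wreath_perm m n g h) (x, j) = wreath_perm m n (\<lambda>j. a \<circ> g j) (k \<circ> h) (x, j)"
    using g h by (auto simp: wp_app G_in H_in)
qed

lemma emb_W: "a \<in> G \<Longrightarrow> k \<in> H \<Longrightarrow> wreath_perm m n (\<lambda>_. a) k \<in> wreath m n G H"
  unfolding wreath_def by blast

lemma comp_W:
  assumes a: "a \<in> G" and k: "k \<in> H" and t: "t \<in> wreath m n G H"
  shows "wreath_perm m n (\<lambda>_. a) k \<circ> t \<in> wreath m n G H"
proof -
  obtain g h where g: "\<forall>j<n. g j \<in> G" "h \<in> H" "t = wreath_perm m n g h" using W_elim[OF t] by blast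
  have "\<forall>j<n. a \<circ> g j \<in> G" using g a pg_comp[OF pgG] by blast
  moreover have "k \<circ> h \<in> H" using g k pg_comp[OF pgH] by blast
  ultimately show ?thesis unfolding wp_comp[OF g(1,2)] g(3) wreath_def by blast
qed

lemma wp_id: "wreath_perm m n (\<lambda>_. id) id = id"
  by (rule ext, clarify) (simp add: wp_app)

lemma emb_inv:
  assumes a: "a \<in> G" and k: "k \<in> H"
  shows "wreath_perm m n (\<lambda>_. inv a) (inv k) \<circ> (wreath_perm m n (\<lambda>_. a) k \<circ> t) = t"
proof -
  have "wreath_perm m n (\<lambda>_. inv a) (inv k) \<circ> wreath_perm m n (\<lambda>_. a) k
      = wreath_perm m n (\<lambda>_. inv a \<circ> a) (inv k \<circ> k)"
    using wp_comp[of "\<lambda>_. a" k] a k by simp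
  also have "\<dots> = id"
    using permutes_inv_o(2)[OF pg_permutes[OF pgG a]] permutes_inv_o(2)[OF pg_permutes[OF pgH k]] wp_id by simp
  finally show ?thesis by (simp add: o_assoc)
qed

lemma left_bij:
  assumes a: "a \<in> G" and k: "k \<in> H"
  shows "bij_betw (\<lambda>t. wreath_perm m n (\<lambda>_. a) k \<circ> t) (wreath m n G H) (wreath m n G H)"
proof (rule bij_betw_byWitness[where f' = "\<lambda>t. wreath_perm m n (\<lambda>_. inv a) (inv k) \<circ> t"])
  show "\<forall>t\<in>wreath m n G H. wreath_perm m n (\<lambda>_. inv a) (inv k) \<circ> (wreath_perm m n (\<lambda>_. a) k \<circ> t) = t"
    using emb_inv[OF a k] by blast
  have ia: "inv a \<in> G" "inv k \<in> H" using pg_inv pgG pgH a k by blast+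
  have "inv (inv a) = a" "inv (inv k) = k"
    using inv_inv_eq permutes_bij pg_permutes pgG pgH a k by metis+
  then show "\<forall>t\<in>wreath m n G H. wreath_perm m n (\<lambda>_. a) k \<circ> (wreath_perm m n (\<lambda>_. inv a) (inv k) \<circ> t) = t"
    using emb_inv[OF ia] by metis
  show "(\<lambda>t. wreath_perm m n (\<lambda>_. a) k \<circ> t) ` wreath m n G H \<subseteq> wreath m n G H"
    using comp_W[OF a k] by blast
  show "(\<lambda>t. wreath_perm m n (\<lambda>_. inv a) (inv k) \<circ> t) ` wreath m n G H \<subseteq> wreath m n G H"
    using comp_W[OF ia] by blast
qed

lemma emb_inj:
  assumes "a \<in> G" "b \<in> G" "k \<in> H" "l \<in> H"
    and eq: "wreath_perm m n (\<lambda>_. a) k = wreath_perm m n (\<lambda>_. b) l"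
  shows "a = b \<and> k = l"
proof
  show "a = b"
  proof
    fix x show "a x = b x"
    proof (cases "x < m")
      case True
      have "wreath_perm m n (\<lambda>_. a) k (x, 0) = wreath_perm m n (\<lambda>_. b) l (x, 0)" using eq by simp
      thus ?thesis using True npos by (simp add: wp_app)
    next
      case False thus ?thesis using G_out assms(1,2) by metis
    qed
  qed
  show "k = l"
  proof
    fix j show "k j = l j"
    proof (cases "j < n")
      case True
      have "wreath_perm m n (\<lambda>_. a) k (0, j) = wreath_perm m n (\<lambda>_. b) l (0, j)" using eq by simp
      thus ?thesis using True mpos by (simp add: wp_app)
    next
      case False thus ?thesis using H_out assms(3,4) by metis
    qed
  qed
qed

lemma cancel_right:
  assumes "t permutes D" "f \<circ> t = f' \<circ> t" shows "f = f'"
proof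
  fix y
  have "f (t (inv t y)) = f' (t (inv t y))" using assms(2) by (metis comp_apply)
  thus "f y = f' y" using permutes_inverses[OF assms(1)] by simp
qed


lemma core:
  assumes SW: "S \<subseteq> wreath m n G H" and Si: "intersecting ({0..<m} \<times> {0..<n}) S"
    and t: "t \<in> wreath m n G H" and ab: "a \<in> G" "b \<in> G" and kl: "k \<in> H" "l \<in> H"
    and s1: "wreath_perm m n (\<lambda>_. a) k \<circ> t \<in> S" and s2: "wreath_perm m n (\<lambda>_. b) l \<circ> t \<in> S"
    and ne: "(a, k) \<noteq> (b, l)"
  shows "\<exists>x<m. \<exists>i<n. a x = b x \<and> k i = l i"
proof -
  have tp: "t permutes ({0..<m} \<times> {0..<n})" using W_permutes[OF t] .
  have "wreath_perm m n (\<lambda>_. a) k \<circ> t \<noteq> wreath_perm m n (\<lambda>_. b) l \<circ> t"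
  proof
    assume "wreath_perm m n (\<lambda>_. a) k \<circ> t = wreath_perm m n (\<lambda>_. b) l \<circ> t"
    hence "wreath_perm m n (\<lambda>_. a) k = wreath_perm m n (\<lambda>_. b) l" using cancel_right[OF tp] by blast
    thus False using emb_inj[OF ab kl] ne by blast
  qed
  hence "perms_intersect ({0..<m} \<times> {0..<n}) (wreath_perm m n (\<lambda>_. a) k \<circ> t) (wreath_perm m n (\<lambda>_. b) l \<circ> t)"
    using Si s1 s2 unfolding intersecting_def by blast
  moreover have "(wreath_perm m n (\<lambda>_. b) l \<circ> t) permutes ({0..<m} \<times> {0..<n})"
    using W_permutes SW s2 by blast
  ultimately obtain q where q: "q \<in> {0..<m} \<times> {0..<n}"
    "(wreath_perm m n (\<lambda>_. a) k \<circ> t) q = (wreath_perm m n (\<lambda>_. b) l \<circ> t) q"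
    using intersect_iff by blast
  obtain x i where xi: "t q = (x, i)" by (cases "t q") auto
  have "(x, i) \<in> {0..<m} \<times> {0..<n}" using permutes_in_image[OF tp] q(1) xi by metis
  moreover have "wreath_perm m n (\<lambda>_. a) k (x, i) = wreath_perm m n (\<lambda>_. b) l (x, i)"
    using q(2) xi by simp
  ultimately show ?thesis by (auto simp: wp_app)
qed

lemma At_bound:
  assumes SW: "S \<subseteq> wreath m n G H" and Si: "intersecting ({0..<m} \<times> {0..<n}) S"
    and t: "t \<in> wreath m n G H" and eG: "EKR {0..<m} G" and eH: "EKR {0..<n} H"
  shows "card {p \<in> G \<times> H. wreath_perm m n (\<lambda>_. fst p) (snd p) \<circ> t \<in> S}
     \<le> max_stab {0..<m} G * max_stab {0..<n} H"
proof -
  define A where "A = {p \<in> G \<times> H. wreath_perm m n (\<lambda>_. fst p) (snd p) \<circ> t \<in> S}"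
  define P where "P = snd ` A"
  define F where "F k = {a. (a, k) \<in> A}" for k
  have c: "\<exists>x<m. \<exists>i<n. a x = b x \<and> k i = l i" if "(a, k) \<in> A" "(b, l) \<in> A" "(a, k) \<noteq> (b, l)" for a b k l
    using core[OF SW Si t, of a b k l] that unfolding A_def by auto
  have fG: "finite G" using pg_finite[OF pgG] by simp
  have fH: "finite H" using pg_finite[OF pgH] by simp
  have PH: "P \<subseteq> H" unfolding P_def A_def by auto
  have "intersecting {0..<n} P"
    unfolding intersecting_def
  proof (intro ballI impI)
    fix k l assume "k \<in> P" "l \<in> P" "k \<noteq> l"
    then obtain a b where "(a, k) \<in> A" "(b, l) \<in> A" unfolding P_def by force
    then obtain i where "i < n" "k i = l i" using c \<open>k \<noteq> l\<close> by blast
    moreover have "l permutes {0..<n}" using PH \<open>l \<in> P\<close> pg_permutes[OF pgH] by blast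
    ultimately show "perms_intersect {0..<n} k l" by (auto simp: intersect_iff)
  qed
  hence cP: "card P \<le> max_stab {0..<n} H" using eH PH unfolding EKR_def by blast
  have cF: "card (F k) \<le> max_stab {0..<m} G" for k
  proof -
    have FG: "F k \<subseteq> G" unfolding F_def A_def by auto
    have "intersecting {0..<m} (F k)"
      unfolding intersecting_def
    proof (intro ballI impI)
      fix a b assume "a \<in> F k" "b \<in> F k" "a \<noteq> b"
      then obtain x where "x < m" "a x = b x" using c unfolding F_def by blast
      moreover have "b permutes {0..<m}" using FG \<open>b \<in> F k\<close> pg_permutes[OF pgG] by blast
      ultimately show "perms_intersect {0..<m} a b" by (auto simp: intersect_iff)
    qed
    thus ?thesis using eG FG unfolding EKR_def by blast
  qed
  have fP: "finite P" using PH fH finite_subset by blast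
  have fF: "finite (F k)" for k using fG finite_subset unfolding F_def A_def by auto
  have sub: "A \<subseteq> (\<lambda>(k, a). (a, k)) ` Sigma P F"
  proof
    fix p assume pA: "p \<in> A"
    obtain a k where pk: "p = (a, k)" by (cases p) auto
    have "k \<in> P" unfolding P_def using pA pk by (simp add: image_eqI[where x = "(a, k)"])
    moreover have "a \<in> F k" unfolding F_def using pA pk by simp
    ultimately have "(k, a) \<in> Sigma P F" by simp
    thus "p \<in> (\<lambda>(k, a). (a, k)) ` Sigma P F" using pk by (simp add: image_eqI[where x = "(k, a)"])
  qed
  have fS: "finite (Sigma P F)" using fP fF by simp
  have "card A \<le> card ((\<lambda>(k, a). (a, k)) ` Sigma P F)" by (rule card_mono) (use fS sub in auto)
  also have "\<dots> \<le> card (Sigma P F)" by (rule card_image_le[OF fS])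
  also have "\<dots> = (\<Sum>k\<in>P. card (F k))" using card_SigmaI fP fF by blast
  also have "\<dots> \<le> (\<Sum>k\<in>P. max_stab {0..<m} G)" using cF by (rule sum_mono)
  also have "\<dots> = card P * max_stab {0..<m} G" by simp
  also have "\<dots> \<le> max_stab {0..<n} H * max_stab {0..<m} G" using cP by simp
  finally show ?thesis unfolding A_def by (simp add: mult.commute)
qed

lemma fin_W: "finite (wreath m n G H)"
  by (rule finite_subset[OF _ finite_permutations[of "{0..<m} \<times> {0..<n}"]])
     (use W_permutes in auto)

lemma sum_count:
  assumes SW: "S \<subseteq> wreath m n G H"
  shows "(\<Sum>t\<in>wreath m n G H. card {p \<in> G \<times> H. wreath_perm m n (\<lambda>_. fst p) (snd p) \<circ> t \<in> S})
     = card (G \<times> H) * card S"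
proof -
  have fG: "finite G" using pg_finite[OF pgG] by simp
  have fH: "finite H" using pg_finite[OF pgH] by simp
  have fE: "finite (G \<times> H)" using fG fH by simp
  let ?W = "wreath m n G H"
  let ?f = "\<lambda>p t. if wreath_perm m n (\<lambda>_. fst p) (snd p) \<circ> t \<in> S then 1 else (0::nat)"
  have "(\<Sum>t\<in>?W. card {p \<in> G \<times> H. wreath_perm m n (\<lambda>_. fst p) (snd p) \<circ> t \<in> S})
      = (\<Sum>t\<in>?W. \<Sum>p\<in>G \<times> H. ?f p t)"
    by (rule sum.cong[OF refl]) (simp add: sum.inter_filter[OF fE, symmetric])
  also have "\<dots> = (\<Sum>p\<in>G \<times> H. \<Sum>t\<in>?W. ?f p t)" by (rule sum.swap)
  also have "\<dots> = (\<Sum>p\<in>G \<times> H. card S)"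
  proof (rule sum.cong[OF refl])
    fix p assume p: "p \<in> G \<times> H"
    define e where "e = (\<lambda>t::nat \<times> nat \<Rightarrow> nat \<times> nat. wreath_perm m n (\<lambda>_. fst p) (snd p) \<circ> t)"
    have b: "bij_betw e ?W ?W" unfolding e_def using left_bij[of "fst p" "snd p"] p by (simp add: mem_Times_iff)
    have inj: "inj_on e ?W" using b by (simp add: bij_betw_def)
    have im: "e ` ?W = ?W" using b by (simp add: bij_betw_def)
    have "(\<Sum>t\<in>?W. ?f p t) = card {t \<in> ?W. e t \<in> S}"
      unfolding e_def by (simp add: sum.inter_filter[OF fin_W, symmetric])
    also have "\<dots> = card (e ` {t \<in> ?W. e t \<in> S})"
      by (rule card_image[symmetric], rule inj_on_subset[OF inj]) blast
    also have "e ` {t \<in> ?W. e t \<in> S} = S"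
    proof
      show "e ` {t \<in> ?W. e t \<in> S} \<subseteq> S" by blast
      show "S \<subseteq> e ` {t \<in> ?W. e t \<in> S}"
      proof
        fix s assume s: "s \<in> S"
        then have "s \<in> e ` ?W" using im SW by blast
        then obtain t where "t \<in> ?W" "e t = s" by blast
        thus "s \<in> e ` {t \<in> ?W. e t \<in> S}" using s by blast
      qed
    qed
    finally show "(\<Sum>t\<in>?W. ?f p t) = card S" .
  qed
  also have "\<dots> = card (G \<times> H) * card S" by simp
  finally show ?thesis .
qed


lemma W_image: "wreath m n G H = (\<lambda>(g, h). wreath_perm m n g h) ` (PiE {0..<n} (\<lambda>_. G) \<times> H)"
proof
  show "wreath m n G H \<subseteq> (\<lambda>(g, h). wreath_perm m n g h) ` (PiE {0..<n} (\<lambda>_. G) \<times> H)"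
  proof
    fix t assume "t \<in> wreath m n G H"
    then obtain g h where g: "\<forall>j<n. g j \<in> G" "h \<in> H" "t = wreath_perm m n g h" by (rule W_elim)
    have "wreath_perm m n (restrict g {0..<n}) h = wreath_perm m n g h"
      by (rule ext, clarify) (simp add: wp_app)
    moreover have "restrict g {0..<n} \<in> PiE {0..<n} (\<lambda>_. G)" using g(1) by auto
    ultimately show "t \<in> (\<lambda>(g, h). wreath_perm m n g h) ` (PiE {0..<n} (\<lambda>_. G) \<times> H)"
      using g(2,3) by (force intro: image_eqI[where x = "(restrict g {0..<n}, h)"])
  qed
  show "(\<lambda>(g, h). wreath_perm m n g h) ` (PiE {0..<n} (\<lambda>_. G) \<times> H) \<subseteq> wreath m n G H"
  proof clarify
    fix g h assume "g \<in> PiE {0..<n} (\<lambda>_. G)" "h \<in> H"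
    hence "\<forall>j<n. g j \<in> G" "h \<in> H" by auto
    thus "wreath_perm m n g h \<in> wreath m n G H" unfolding wreath_def by blast
  qed
qed

lemma Phi_inj: "inj_on (\<lambda>(g, h). wreath_perm m n g h) (PiE {0..<n} (\<lambda>_. G) \<times> H)"
proof (rule inj_onI, clarify)
  fix g h g' h'
  assume g: "g \<in> PiE {0..<n} (\<lambda>_. G)" "h \<in> H" and g': "g' \<in> PiE {0..<n} (\<lambda>_. G)" "h' \<in> H"
    and eq: "wreath_perm m n g h = wreath_perm m n g' h'"
  have "h = h'"
  proof
    fix j show "h j = h' j"
    proof (cases "j < n")
      case True
      have "wreath_perm m n g h (0, j) = wreath_perm m n g' h' (0, j)" using eq by simp
      thus ?thesis using True mpos by (simp add: wp_app)
    next
      case False thus ?thesis using H_out g(2) g'(2) by metis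
    qed
  qed
  moreover have "g = g'"
  proof (rule PiE_ext[OF g(1) g'(1)])
    fix j assume j: "j \<in> {0..<n}"
    show "g j = g' j"
    proof
      fix x show "g j x = g' j x"
      proof (cases "x < m")
        case True
        have "wreath_perm m n g h (x, j) = wreath_perm m n g' h' (x, j)" using eq by simp
        thus ?thesis using True j by (simp add: wp_app)
      next
        case False
        have "g j \<in> G" "g' j \<in> G" using g(1) g'(1) j by auto
        thus ?thesis using G_out False by metis
      qed
    qed
  qed
  ultimately show "g = g' \<and> h = h'" by simp
qed

lemma card_W: "card (wreath m n G H) = card G ^ n * card H"
proof -
  have "card (wreath m n G H) = card (PiE {0..<n} (\<lambda>_. G) \<times> H)"
    unfolding W_image by (rule card_image[OF Phi_inj])
  also have "\<dots> = card G ^ n * card H" by (simp add: card_cartesian_product card_PiE)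
  finally show ?thesis .
qed

lemma card_Q:
  assumes x0: "x0 < m" and j0: "j0 < n"
  shows "card (stabilizer (wreath m n G H) (x0, j0)) * card G
       = card G ^ n * card (stabilizer G x0) * card (stabilizer H j0)"
proof -
  define P' where "P' = PiE {0..<n} (\<lambda>j. if j = j0 then stabilizer G x0 else G)"
  have sub: "P' \<times> stabilizer H j0 \<subseteq> PiE {0..<n} (\<lambda>_. G) \<times> H"
    unfolding P'_def stabilizer_def by (auto simp: PiE_iff split: if_splits)
  have Q: "stabilizer (wreath m n G H) (x0, j0) = (\<lambda>(g, h). wreath_perm m n g h) ` (P' \<times> stabilizer H j0)"
  proof
    show "stabilizer (wreath m n G H) (x0, j0) \<subseteq> (\<lambda>(g, h). wreath_perm m n g h) ` (P' \<times> stabilizer H j0)"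
    proof
      fix t assume t: "t \<in> stabilizer (wreath m n G H) (x0, j0)"
      then obtain g h where gh: "g \<in> PiE {0..<n} (\<lambda>_. G)" "h \<in> H" "t = wreath_perm m n g h"
        unfolding stabilizer_def W_image by auto
      have fix0: "g j0 x0 = x0" "h j0 = j0" using t gh(3) x0 j0 unfolding stabilizer_def by (auto simp: wp_app)
      have "g \<in> P'" using gh(1) fix0 unfolding P'_def stabilizer_def by (auto simp: PiE_iff)
      moreover have "h \<in> stabilizer H j0" using gh(2) fix0 unfolding stabilizer_def by auto
      ultimately show "t \<in> (\<lambda>(g, h). wreath_perm m n g h) ` (P' \<times> stabilizer H j0)"
        using gh(3) by (force intro: image_eqI[where x = "(g, h)"])
    qed
    show "(\<lambda>(g, h). wreath_perm m n g h) ` (P' \<times> stabilizer H j0) \<subseteq> stabilizer (wreath m n G H) (x0, j0)"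
    proof clarify
      fix g h assume gh: "g \<in> P'" "h \<in> stabilizer H j0"
      have "(g, h) \<in> PiE {0..<n} (\<lambda>_. G) \<times> H" using sub gh by blast
      hence "wreath_perm m n g h \<in> wreath m n G H" unfolding W_image by force
      moreover have "g j0 \<in> (if j0 = j0 then stabilizer G x0 else G)"
        using PiE_mem[of g "{0..<n}" "\<lambda>j. if j = j0 then stabilizer G x0 else G" j0] gh(1) j0 unfolding P'_def by simp
      hence "g j0 x0 = x0" unfolding stabilizer_def by simp
      moreover have "h j0 = j0" using gh unfolding stabilizer_def by simp
      ultimately show "wreath_perm m n g h \<in> stabilizer (wreath m n G H) (x0, j0)"
        unfolding stabilizer_def using x0 j0 by (simp add: wp_app)
    qed
  qed
  have "card (stabilizer (wreath m n G H) (x0, j0)) = card (P' \<times> stabilizer H j0)"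
    unfolding Q by (rule card_image[OF inj_on_subset[OF Phi_inj sub]])
  also have "\<dots> = card P' * card (stabilizer H j0)" by (simp add: card_cartesian_product)
  finally have cQ: "card (stabilizer (wreath m n G H) (x0, j0)) = card P' * card (stabilizer H j0)" .
  define f where "f j = card (if j = j0 then stabilizer G x0 else G)" for j
  have "card P' = (\<Prod>j\<in>{0..<n}. f j)"
    unfolding P'_def f_def by (rule card_PiE) simp
  also have "\<dots> = f j0 * (\<Prod>j\<in>{0..<n} - {j0}. f j)"
    by (rule prod.remove) (use j0 in simp_all)
  also have "f j0 = card (stabilizer G x0)" unfolding f_def by simp
  also have "(\<Prod>j\<in>{0..<n} - {j0}. f j) = (\<Prod>j\<in>{0..<n} - {j0}. card G)"
    by (rule prod.cong[OF refl]) (simp add: f_def)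
  also have "\<dots> = card G ^ (n - 1)" using j0 by simp
  finally have cP: "card P' = card (stabilizer G x0) * card G ^ (n - 1)" .
  have pw: "card G ^ (n - 1) * card G = card G ^ n" using npos by (cases n) simp_all
  have "card (stabilizer G x0) * card G ^ (n - 1) * card (stabilizer H j0) * card G
      = card (stabilizer G x0) * card (stabilizer H j0) * (card G ^ (n - 1) * card G)"
    by (simp only: ac_simps)
  also have "\<dots> = card G ^ n * card (stabilizer G x0) * card (stabilizer H j0)"
    unfolding pw by (simp only: ac_simps)
  finally show ?thesis unfolding cQ cP .
qed

end

theorem theorem25:
  fixes m n :: nat and G H :: "(nat \<Rightarrow> nat) set"
  assumes "perm_group {0..<m} G" and "perm_group {0..<n} H"
    and "EKR {0..<m} G" and "EKR {0..<n} H"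
  shows "EKR ({0..<m} \<times> {0..<n}) (wreath m n G H)"
proof -
  have m0: "0 < m" using EKR_nonempty[OF assms(1,3)] by simp
  have n0: "0 < n" using EKR_nonempty[OF assms(2,4)] by simp
  note ctx = assms(1,2) m0 n0
  have fG: "finite G" using pg_finite[OF assms(1)] by simp
  have fH: "finite H" using pg_finite[OF assms(2)] by simp
  have cG: "card G > 0" using fG pg_nonempty[OF assms(1)] by (simp add: card_gt_0_iff)
  have cH: "card H > 0" using fH pg_nonempty[OF assms(2)] by (simp add: card_gt_0_iff)
  obtain x0 where x0: "x0 \<in> {0..<m}" "max_stab {0..<m} G \<le> card (stabilizer G x0)"
    using max_stab_attained[OF assms(1)] m0 by fastforce
  obtain j0 where j0: "j0 \<in> {0..<n}" "max_stab {0..<n} H \<le> card (stabilizer H j0)"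
    using max_stab_attained[OF assms(2)] n0 by fastforce
  show ?thesis unfolding EKR_def
  proof (intro allI impI)
    fix S assume SW: "S \<subseteq> wreath m n G H" and Si: "intersecting ({0..<m} \<times> {0..<n}) S"
    let ?W = "wreath m n G H"
    let ?sG = "max_stab {0..<m} G" and ?sH = "max_stab {0..<n} H"
    let ?Q = "stabilizer ?W (x0, j0)"
    have "card G * card H * card S
        = (\<Sum>t\<in>?W. card {p \<in> G \<times> H. wreath_perm m n (\<lambda>_. fst p) (snd p) \<circ> t \<in> S})"
      using sum_count[OF ctx SW] by (simp add: card_cartesian_product)
    also have "\<dots> \<le> (\<Sum>t\<in>?W. ?sG * ?sH)"
      by (rule sum_mono) (rule At_bound[OF ctx SW Si _ assms(3,4)])
    also have "\<dots> = card ?W * (?sG * ?sH)" by simp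
    also have "\<dots> \<le> card ?W * (card (stabilizer G x0) * card (stabilizer H j0))"
      using x0(2) j0(2) by (intro mult_le_mono2 mult_le_mono) auto
    also have "\<dots> = card H * (card G ^ n * card (stabilizer G x0) * card (stabilizer H j0))"
      unfolding card_W[OF ctx] by (simp only: ac_simps)
    also have "\<dots> = card H * (card ?Q * card G)"
      using card_Q[OF ctx, of x0 j0] x0(1) j0(1) by simp
    also have "\<dots> = card G * card H * card ?Q" by (simp only: ac_simps)
    finally have "card S \<le> card ?Q" using cG cH by simp
    also have "card ?Q \<le> max_stab ({0..<m} \<times> {0..<n}) ?W"
      by (rule max_stab_ge) (use x0(1) j0(1) in auto)
    finally show "card S \<le> max_stab ({0..<m} \<times> {0..<n}) ?W" .
  qed
qed

end
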